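(* Let $\mathfrak{G}$ be the Goldman Lie algebra of the closed torus over $\mathbb{Z}$, and define $G_0=\mathfrak{G}$ and $G_r=[\mathfrak{G},G_{r-1}]$ for $r\geq1$. Then the lower central series stabilizes: for every $r\geq 0$, $[\mathfrak{G},G_r]$ equals the $\mathbb{Z}$-submodule spanned by the elements $\gcd(i,j)\,a^ib^j$ for $i,j\in\mathbb{Z}\setminus\{0\}$, together with $n\,a^n$ and $n\,b^n$ for $n\in\mathbb{Z}\setminus\{0\}$.
   Context: Let $T^2=\Sigma_{1,0}$ be the closed oriented torus and $\hat\pi\cong\pi_1(T^2)\cong\mathbb{Z}^2$ its set of free homotopy classes of loops, written $a^ib^j$ with $a,b$ the standard generators. The Goldman bracket ($[\alpha,\beta]=\sum_{p\in\alpha\cap\beta}\epsilon(p)\,\alpha*_p\beta$ over transverse intersection points, extended bilinearly) is given on the torus by $[a^ib^j,a^kb^l]=(il-jk)\,a^{i+k}b^{j+l}$. The Goldman Lie algebra over $\mathbb{Z}$ is $\mathbb{Z}\hat\pi$ with this bracket; $[X,Y]$ denotes the $\mathbb{Z}$-span of brackets of elements of $X$ and $Y$. *)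

theory Defs
  imports Main "HOL-Library.Poly_Mapping"
begin

text \<open>The Goldman Lie algebra of the closed torus over the integers: the free
  Z-module on the free homotopy classes a^i b^j, i.e. finitely supported integer
  functions on Z x Z.\<close>

type_synonym goldman_torus = "(int \<times> int) \<Rightarrow>\<^sub>0 int"

definition loop :: "int \<Rightarrow> int \<Rightarrow> goldman_torus" where
  "loop i j = Poly_Mapping.single (i, j) 1"

text \<open>Goldman bracket, the bilinear extension of
  [a^i b^j, a^k b^l] = (il - jk) a^(i+k) b^(j+l).\<close>

definition gbracket :: "goldman_torus \<Rightarrow> goldman_torus \<Rightarrow> goldman_torus" where
  "gbracket x y =
     (\<Sum>p\<in>Poly_Mapping.keys x. \<Sum>q\<in>Poly_Mapping.keys y.
        Poly_Mapping.single (fst p + fst q, snd p + snd q)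
          (Poly_Mapping.lookup x p * Poly_Mapping.lookup y q * (fst p * snd q - snd p * fst q)))"

text \<open>Z-span (Z-submodule generated by a set) = additive subgroup generated.\<close>

inductive_set zspan :: "goldman_torus set \<Rightarrow> goldman_torus set" for S where
  zspan_zero: "0 \<in> zspan S"
| zspan_base: "s \<in> S \<Longrightarrow> s \<in> zspan S"
| zspan_diff: "x \<in> zspan S \<Longrightarrow> y \<in> zspan S \<Longrightarrow> x - y \<in> zspan S"

definition bracket_set :: "goldman_torus set \<Rightarrow> goldman_torus set \<Rightarrow> goldman_torus set" where
  "bracket_set X Y = zspan {gbracket x y | x y. x \<in> X \<and> y \<in> Y}"

fun lcs :: "nat \<Rightarrow> goldman_torus set" where
  "lcs 0 = UNIV"
| "lcs (Suc r) = bracket_set UNIV (lcs r)"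

end

theory Submission
  imports Defs
begin

abbreviation TT :: "goldman_torus set" where
  "TT \<equiv> zspan ({Poly_Mapping.single (i, j) (gcd i j) | i j. i \<noteq> 0 \<and> j \<noteq> 0}
         \<union> {Poly_Mapping.single (n, 0) n | n. n \<noteq> 0}
         \<union> {Poly_Mapping.single (0, n) n | n. n \<noteq> 0})"

lemma zspan_neg: "x \<in> zspan S \<Longrightarrow> - x \<in> zspan S"
  using zspan_diff[OF zspan_zero, of x S] by simp

lemma zspan_add: "x \<in> zspan S \<Longrightarrow> y \<in> zspan S \<Longrightarrow> x + y \<in> zspan S"
  using zspan_diff[of x S "- y"] zspan_neg[of y S] by simp

lemma zspan_sum: "(\<And>x. x \<in> A \<Longrightarrow> f x \<in> zspan S) \<Longrightarrow> sum f A \<in> zspan S"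
proof (induction A rule: infinite_finite_induct)
  case (infinite A) then show ?case by (simp add: zspan_zero)
next
  case empty then show ?case by (simp add: zspan_zero)
next
  case (insert x F) then show ?case by (simp add: zspan_add)
qed

lemma zspan_subset: "S \<subseteq> zspan T \<Longrightarrow> zspan S \<subseteq> zspan T"
proof
  fix x assume a: "S \<subseteq> zspan T" and "x \<in> zspan S"
  from this(2) show "x \<in> zspan T"
    by (induction x rule: zspan.induct) (use a in \<open>auto intro: zspan.intros\<close>)
qed

lemma zspan_mono: "S \<subseteq> T \<Longrightarrow> zspan S \<subseteq> zspan T"
  by (rule zspan_subset) (auto intro: zspan_base)

lemma single_mult_nat: "Poly_Mapping.single p c \<in> zspan S \<Longrightarrow>
   Poly_Mapping.single p (int n * c) \<in> zspan S"
proof (induction n)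
  case 0 then show ?case by (simp add: zspan_zero)
next
  case (Suc n)
  have "Poly_Mapping.single p (int (Suc n) * c) = Poly_Mapping.single p (int n * c) + Poly_Mapping.single p c"
    by (simp add: single_add[symmetric] algebra_simps)
  then show ?case using Suc zspan_add by metis
qed

lemma single_mult: assumes h: "Poly_Mapping.single p c \<in> zspan S" shows
   "Poly_Mapping.single p (e * c) \<in> zspan S"
proof (cases "e \<ge> 0")
  case True
  then show ?thesis
    using single_mult_nat[OF h, of "nat e"] by simp
next
  case False
  have "Poly_Mapping.single p (e * c) = - Poly_Mapping.single p (int (nat (- e)) * c)"
    using False by (simp add: single_uminus[symmetric])
  then show ?thesis using single_mult_nat[OF h, of "nat (-e)"] zspan_neg by metis
qed

lemma gen: "Poly_Mapping.single (k, l) (gcd k l) \<in> TT"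
proof -
  consider "k = 0" "l = 0" | "k \<noteq> 0" "l \<noteq> 0" | "k \<noteq> 0" "l = 0" | "k = 0" "l \<noteq> 0" by blast
  then show ?thesis
  proof cases
    case 1 then show ?thesis by (simp add: zspan_zero)
  next
    case 2 then show ?thesis by (blast intro: zspan_base)
  next
    case 3
    have "Poly_Mapping.single (k, 0) k \<in> TT" using 3 by (blast intro: zspan_base)
    moreover have "sgn k * k = gcd k l" using 3 by (simp add: sgn_if abs_if)
    ultimately show ?thesis using single_mult[of "(k,0)" k _ "sgn k"] 3 by simp
  next
    case 4
    have "Poly_Mapping.single (0, l) l \<in> TT" using 4 by (blast intro: zspan_base)
    moreover have "sgn l * l = gcd k l" using 4 by (simp add: sgn_if abs_if)
    ultimately show ?thesis using single_mult[of "(0,l)" l _ "sgn l"] 4 by simp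
  qed
qed

lemma gen_dvd: "gcd k l dvd c \<Longrightarrow> Poly_Mapping.single (k, l) c \<in> TT"
proof -
  assume "gcd k l dvd c"
  then obtain e where "c = e * gcd k l" by (metis dvd_def mult.commute)
  then show ?thesis using single_mult[OF gen] by simp
qed

lemma gbracket_single:
  "gbracket (Poly_Mapping.single p a) (Poly_Mapping.single q b) =
   Poly_Mapping.single (fst p + fst q, snd p + snd q) (a * b * (fst p * snd q - snd p * fst q))"
  by (cases "a = 0"; cases "b = 0") (simp_all add: gbracket_def)

lemma bracket_in_TT: "gbracket x y \<in> TT"
  unfolding gbracket_def
proof (intro zspan_sum)
  fix p q
  show "Poly_Mapping.single (fst p + fst q, snd p + snd q)
          (Poly_Mapping.lookup x p * Poly_Mapping.lookup y q * (fst p * snd q - snd p * fst q)) \<in> TT"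
  proof (rule gen_dvd)
    let ?m = "fst p + fst q" and ?n = "snd p + snd q"
    have "fst p * snd q - snd p * fst q = fst p * ?n - snd p * ?m" by (simp add: algebra_simps)
    moreover have "gcd ?m ?n dvd fst p * ?n - snd p * ?m" by simp
    ultimately show "gcd ?m ?n dvd Poly_Mapping.lookup x p * Poly_Mapping.lookup y q * (fst p * snd q - snd p * fst q)"
      by (metis dvd_mult)
  qed
qed

lemma key: "Poly_Mapping.single (m, n) (gcd m n) \<in> bracket_set UNIV TT"
proof (cases "gcd m n = 0")
  case True then show ?thesis by (simp add: bracket_set_def zspan_zero)
next
  case False
  define d where "d = gcd m n"
  have dne: "d \<noteq> 0" using False d_def by simp
  obtain m' where m': "m = d * m'" unfolding d_def by (metis gcd_dvd1 dvd_def)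
  obtain n' where n': "n = d * n'" unfolding d_def by (metis gcd_dvd2 dvd_def)
  obtain u v where uv: "u * m + v * n = d" unfolding d_def using bezout_int by blast
  have "d * (u * m' + v * n') = d * 1" using uv m' n' by (simp add: algebra_simps)
  then have uv1: "u * m' + v * n' = 1" using mult_left_cancel[OF dne] by blast
  define i where "i = v"
  define j where "j = - u"
  define k where "k = m - i"
  define l where "l = n - j"
  have e1: "k * n' - l * m' = -1"
    using uv1 m' n' unfolding k_def l_def i_def j_def by (simp add: algebra_simps)
  have "gcd k l dvd k * n' - l * m'"
    by (intro dvd_diff dvd_mult2 gcd_dvd1 gcd_dvd2)
  then have "gcd k l dvd 1" unfolding e1 by simp
  then have g1: "gcd k l = 1" by simp
  have coef: "i * l - j * k = d"
    using uv unfolding k_def l_def i_def j_def by (simp add: algebra_simps)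
  have ik: "i + k = m" and jl: "j + l = n" unfolding k_def l_def by simp_all
  have "gbracket (loop i j) (Poly_Mapping.single (k, l) (gcd k l)) = Poly_Mapping.single (i + k, j + l) (1 * gcd k l * (i * l - j * k))"
    unfolding loop_def gbracket_single by simp
  also have "\<dots> = Poly_Mapping.single (m, n) (gcd m n)"
    unfolding ik jl g1 coef d_def by simp
  finally have br: "gbracket (loop i j) (Poly_Mapping.single (k, l) (gcd k l)) = Poly_Mapping.single (m, n) (gcd m n)" .
  have "Poly_Mapping.single (k, l) (gcd k l) \<in> TT" by (rule gen)
  then have "Poly_Mapping.single (m, n) (gcd m n) \<in> {gbracket x y |x y. x \<in> UNIV \<and> y \<in> TT}"
    unfolding br[symmetric] by blast
  then show ?thesis unfolding bracket_set_def by (rule zspan_base)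
qed

lemma L2: "TT \<subseteq> bracket_set UNIV TT"
  unfolding bracket_set_def
proof (rule zspan_subset)
  have K: "Poly_Mapping.single (m, n) (gcd m n) \<in> zspan {gbracket x y |x y. x \<in> UNIV \<and> y \<in> TT}" for m n
    using key[of m n] unfolding bracket_set_def .
  show "{Poly_Mapping.single (i, j) (gcd i j) | i j. i \<noteq> 0 \<and> j \<noteq> 0}
         \<union> {Poly_Mapping.single (n, 0) n | n. n \<noteq> 0}
         \<union> {Poly_Mapping.single (0, n) n | n. n \<noteq> 0}
    \<subseteq> zspan {gbracket x y |x y. x \<in> UNIV \<and> y \<in> TT}"
  proof (intro Un_least subsetI)
    fix s :: goldman_torus assume "s \<in> {Poly_Mapping.single (i, j) (gcd i j) | i j. i \<noteq> 0 \<and> j \<noteq> 0}"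
    then show "s \<in> zspan {gbracket x y |x y. x \<in> UNIV \<and> y \<in> TT}"
      using K unfolding bracket_set_def by blast
  next
    fix s :: goldman_torus assume "s \<in> {Poly_Mapping.single (n, 0) n | n. n \<noteq> 0}"
    then obtain n where s: "s = Poly_Mapping.single (n, 0) n" by blast
    from single_mult[OF K[of n 0], of "sgn n"] show "s \<in> zspan {gbracket x y |x y. x \<in> UNIV \<and> y \<in> TT}"
      unfolding s by (simp add: sgn_mult_abs)
  next
    fix s :: goldman_torus assume "s \<in> {Poly_Mapping.single (0, n) n | n. n \<noteq> 0}"
    then obtain n where s: "s = Poly_Mapping.single (0, n) n" by blast
    from single_mult[OF K[of 0 n], of "sgn n"] show "s \<in> zspan {gbracket x y |x y. x \<in> UNIV \<and> y \<in> TT}"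
      unfolding s by (simp add: sgn_mult_abs)
  qed
qed

lemma L1: "bracket_set UNIV UNIV \<subseteq> TT"
  unfolding bracket_set_def by (rule zspan_subset) (auto intro: bracket_in_TT)

lemma bmono: "X \<subseteq> Y \<Longrightarrow> bracket_set UNIV X \<subseteq> bracket_set UNIV Y"
  unfolding bracket_set_def by (rule zspan_mono) blast

theorem mainTheorem5:
  fixes r :: nat
  shows "bracket_set UNIV (lcs r) =
    zspan ({Poly_Mapping.single (i, j) (gcd i j) | i j. i \<noteq> 0 \<and> j \<noteq> 0}
         \<union> {Poly_Mapping.single (n, 0) n | n. n \<noteq> 0}
         \<union> {Poly_Mapping.single (0, n) n | n. n \<noteq> 0})"
proof (induction r)
  case 0
  have "TT \<subseteq> bracket_set UNIV UNIV" using L2 bmono[of TT UNIV] by blast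
  then show ?case using L1 by simp
next
  case (Suc r)
  have "bracket_set UNIV TT \<subseteq> TT" using L1 bmono[of TT UNIV] by blast
  then show ?case using L2 Suc by simp
qed

end
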